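(* Let $X_1,\dots,X_n$ be (possibly dependent) random variables taking values in $\{0,1\}$, with $p_i=E(X_i)$, and let $S_n=\sum_{i=1}^n X_i$ and $\lambda=E(S_n)=\sum_{i=1}^n p_i$. Then $$D(P_{S_n}\,\|\,\mathrm{Po}(\lambda))\le \sum_{i=1}^n p_i^2+\Big[\sum_{i=1}^n H(X_i)-H(X_1,\dots,X_n)\Big].$$
   Context: $P_{S_n}$ is the distribution of $S_n$; $\mathrm{Po}(\lambda)$ is the Poisson distribution with mean $\lambda$. For distributions $P,Q$ on a countable set $S$, $D(P\|Q)=\sum_{x\in S}P(x)\log\frac{P(x)}{Q(x)}$ (natural logarithm, with conventions $0\log(0/a)=0$, $0\log(0/0)=0$, $a\log(a/0)=\infty$ for $a>0$). $H(X)=-\sum_x P(x)\log P(x)$ is the Shannon entropy of a discrete random variable or random vector, and $H(X_1,\dots,X_n)$ is the joint entropy. *)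

theory Defs
  imports "HOL-Probability.Probability"
begin

definition kl_div :: "'b pmf \<Rightarrow> 'b pmf \<Rightarrow> ereal" where
  "kl_div P Q =
     (if \<exists>x\<in>set_pmf P. pmf Q x = 0 then \<infinity>
      else ereal (\<Sum>\<^sub>\<infinity>x\<in>set_pmf P. pmf P x * ln (pmf P x / pmf Q x)))"

definition shannon_entropy :: "'b pmf \<Rightarrow> real" where
  "shannon_entropy P = - (\<Sum>\<^sub>\<infinity>x\<in>set_pmf P. pmf P x * ln (pmf P x))"

text \<open>Poisson distribution with mean lam >= 0; Po(0) is the point mass at 0.
  (The library's poisson_pmf requires a strictly positive rate.)\<close>
definition Po :: "real \<Rightarrow> nat pmf" where
  "Po lam = (if 0 < lam then poisson_pmf lam else return_pmf 0)"

end

theory Submission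
  imports Defs
begin


definition Lst :: "nat \<Rightarrow> nat list set" where
  "Lst n = {xs. length xs = n \<and> set xs \<subseteq> {0,1}}"

lemma finite_Lst: "finite (Lst n)"
proof -
  have "Lst n = {xs. set xs \<subseteq> {0,1} \<and> length xs = n}" unfolding Lst_def by auto
  thus ?thesis using finite_lists_length_eq[of "{0::nat,1}" n] by simp
qed

lemma Lst_0: "Lst 0 = {[]}" unfolding Lst_def by auto

lemma Lst_Suc: "Lst (Suc n) = Cons 0 ` Lst n \<union> Cons 1 ` Lst n"
  unfolding Lst_def by (auto simp: length_Suc_conv image_iff)

lemma bern_ineq:
  fixes a b :: real assumes "a \<ge> 0" "b \<ge> 0"
  shows "a^(Suc m) + real (Suc m) * b * a^m \<le> (a+b)^(Suc m)"
proof (induction m)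
  case 0 then show ?case by simp
next
  case (Suc m)
  have "(a+b)^(Suc (Suc m)) = (a+b) * (a+b)^(Suc m)" by simp
  also have "\<dots> \<ge> (a+b) * (a^(Suc m) + real (Suc m) * b * a^m)"
    using Suc assms by (intro mult_left_mono) auto
  finally have h: "(a+b)^(Suc (Suc m)) \<ge> (a+b) * (a^(Suc m) + real (Suc m) * b * a^m)" .
  have "(a+b) * (a^(Suc m) + real (Suc m) * b * a^m) \<ge> a^(Suc (Suc m)) + real (Suc (Suc m)) * b * a^(Suc m)"
    using assms by (simp add: algebra_simps)
  then show ?case using h by linarith
qed

definition esym :: "(nat \<Rightarrow> real) \<Rightarrow> nat \<Rightarrow> nat \<Rightarrow> real" where
  "esym r n k = (\<Sum>xs\<in>Lst n. if sum_list xs = k then (\<Prod>j<n. r j ^ (xs!j)) else 0)"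

lemma esym_bound:
  assumes "\<And>j. r j \<ge> 0"
  shows "esym r n k \<le> (\<Sum>j<n. r j)^k / fact k"
  using assms
proof (induction n arbitrary: r k)
  case 0
  then show ?case unfolding esym_def Lst_0 by (cases k) auto
next
  case (Suc n)
  define r' where "r' = (\<lambda>j. r (Suc j))"
  define R' where "R' = (\<Sum>j<n. r' j)"
  have R'0: "R' \<ge> 0" unfolding R'_def r'_def using Suc.prems by (simp add: sum_nonneg)
  have tot: "(\<Sum>j<Suc n. r j) = r 0 + R'" unfolding R'_def r'_def by (rule sum.lessThan_Suc_shift)
  have e: "esym r (Suc n) k = (\<Sum>ys\<in>Lst n. if sum_list ys = k then (\<Prod>j<n. r' j ^ (ys!j)) else 0)
        + r 0 * (\<Sum>ys\<in>Lst n. if 1 + sum_list ys = k then (\<Prod>j<n. r' j ^ (ys!j)) else 0)" (is "_ = ?thesis2")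
  proof -
    have pc: "(\<Prod>j<Suc n. r j ^ ((b#ys)!j)) = r 0 ^ b * (\<Prod>j<n. r' j ^ (ys!j))" for b ys
      unfolding r'_def by (subst prod.lessThan_Suc_shift) simp
    have disj: "Cons 0 ` Lst n \<inter> Cons 1 ` Lst n = {}" by auto
    have inj0: "inj_on (Cons (0::nat)) (Lst n)" and inj1: "inj_on (Cons (1::nat)) (Lst n)" by simp_all
    have "esym r (Suc n) k = (\<Sum>xs\<in>Cons 0 ` Lst n. if sum_list xs = k then (\<Prod>j<Suc n. r j ^ (xs!j)) else 0)
       + (\<Sum>xs\<in>Cons 1 ` Lst n. if sum_list xs = k then (\<Prod>j<Suc n. r j ^ (xs!j)) else 0)"
      unfolding esym_def Lst_Suc
      by (rule sum.union_disjoint) (simp_all only: finite_Lst finite_imageI disj)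
    also have "\<dots> = (\<Sum>ys\<in>Lst n. if sum_list (0#ys) = k then (\<Prod>j<Suc n. r j ^ ((0#ys)!j)) else 0)
       + (\<Sum>ys\<in>Lst n. if sum_list (1#ys) = k then (\<Prod>j<Suc n. r j ^ ((1#ys)!j)) else 0)"
      by (simp only: sum.reindex[OF inj0] sum.reindex[OF inj1] comp_def)
    also have "\<dots> = ?thesis2" 
      unfolding pc by (simp add: sum_distrib_left cong: if_cong) (intro sum.cong refl, simp)
    finally show ?thesis .
  qed
  show ?case
  proof (cases k)
    case 0
    have "esym r (Suc n) k = esym r' n 0" using e 0 by (simp add: esym_def)
    also have "\<dots> \<le> 1" using Suc.IH[of r' 0] Suc.prems unfolding r'_def by simp
    finally show ?thesis using 0 by simp
  next
    case (Suc m)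
    have e2: "esym r (Suc n) k = esym r' n (Suc m) + r 0 * esym r' n m"
      using e Suc by (simp add: esym_def)
    have b1: "esym r' n (Suc m) \<le> R'^(Suc m) / fact (Suc m)"
      using Suc.IH[of r' "Suc m"] Suc.prems unfolding r'_def R'_def by simp
    have b2: "esym r' n m \<le> R'^m / fact m"
      using Suc.IH[of r' m] Suc.prems unfolding r'_def R'_def by simp
    have "r 0 * esym r' n m \<le> r 0 * (R'^m / fact m)"
      using b2 Suc.prems by (intro mult_left_mono) auto
    hence "esym r (Suc n) k \<le> R'^(Suc m) / fact (Suc m) + r 0 * (R'^m / fact m)"
      using e2 b1 by linarith
    also have "\<dots> = (R'^(Suc m) + real (Suc m) * r 0 * R'^m) / fact (Suc m)"
      unfolding add_divide_distrib fact_Suc by (simp del: of_nat_Suc)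
    also have "\<dots> \<le> (R' + r 0)^(Suc m) / fact (Suc m)"
      using bern_ineq[OF R'0, of "r 0" m] \<open>\<And>j. r j \<ge> 0\<close>
      by (intro divide_right_mono) auto
    finally show ?thesis using Suc tot by (simp add: add.commute)
  qed
qed


lemma pmf_map_fin:
  assumes "finite (set_pmf J)"
  shows "pmf (map_pmf g J) y = (\<Sum>x\<in>{x\<in>set_pmf J. g x = y}. pmf J x)"
proof -
  have "pmf (map_pmf g J) y = measure J (g -` {y} \<inter> set_pmf J)"
    by (simp add: pmf_map measure_Int_set_pmf)
  also have "g -` {y} \<inter> set_pmf J = {x\<in>set_pmf J. g x = y}" by auto
  also have "measure J \<dots> = (\<Sum>x\<in>{x\<in>set_pmf J. g x = y}. pmf J x)"
    using assms by (intro measure_measure_pmf_finite) auto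
  finally show ?thesis .
qed

lemma entropy_sup:
  assumes "finite B" "set_pmf P \<subseteq> B"
  shows "shannon_entropy P = - (\<Sum>x\<in>B. pmf P x * ln (pmf P x))"
proof -
  have f: "finite (set_pmf P)" using assms finite_subset by blast
  have "shannon_entropy P = - (\<Sum>x\<in>set_pmf P. pmf P x * ln (pmf P x))"
    unfolding shannon_entropy_def using f by simp
  also have "(\<Sum>x\<in>set_pmf P. pmf P x * ln (pmf P x)) = (\<Sum>x\<in>B. pmf P x * ln (pmf P x))"
    using assms by (intro sum.mono_neutral_left) (auto simp: set_pmf_eq)
  finally show ?thesis .
qed

lemma kl_fin:
  assumes "finite (set_pmf P)" "\<And>x. x \<in> set_pmf P \<Longrightarrow> pmf Q x > 0"
  shows "kl_div P Q = ereal (\<Sum>x\<in>set_pmf P. pmf P x * ln (pmf P x / pmf Q x))"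
  unfolding kl_div_def using assms by force

lemma Po_pmf:
  assumes "lam \<ge> 0"
  shows "pmf (Po lam) k = exp (-lam) * lam ^ k / fact k"
proof (cases "lam > 0")
  case True then show ?thesis by (simp add: Po_def)
next
  case False
  then have "lam = 0" using assms by simp
  then show ?thesis by (cases k) (auto simp: Po_def indicator_def)
qed

lemma gibbs_term:
  fixes a b c d :: real
  assumes "a > 0" "b > 0" "c > 0" "d > 0"
  shows "a * ln (c / d) \<le> a * ln (a / b) - a + b * c / d"
proof -
  have "ln (b*c/(a*d)) \<le> b*c/(a*d) - 1" using assms by (intro ln_le_minus_one) simp
  moreover have "ln (b*c/(a*d)) = ln b + ln c - ln a - ln d"
    using assms by (simp add: ln_div ln_mult)
  ultimately have "a * (ln b + ln c - ln a - ln d) \<le> a * (b*c/(a*d) - 1)"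
    using assms by (intro mult_left_mono) auto
  moreover have "a * (b*c/(a*d) - 1) = b * c / d - a" using assms by (simp add: field_simps)
  ultimately have h: "a * (ln b + ln c - ln a - ln d) \<le> b * c / d - a" by simp
  have e: "ln (c/d) = ln c - ln d" "ln (a/b) = ln a - ln b" using assms by (simp_all add: ln_div)
  show ?thesis unfolding e using h by (simp add: algebra_simps)
qed

lemma bern_kl:
  fixes r :: real assumes "0 \<le> r" "r \<le> 1"
  shows "r + (1 - r) * ln (1 - r) \<le> r^2"
proof (cases "r = 1")
  case True then show ?thesis by simp
next
  case False
  then have "ln (1 - r) \<le> (1 - r) - 1" using assms by (intro ln_le_minus_one) simp
  then have "(1 - r) * ln (1 - r) \<le> (1 - r) * ((1 - r) - 1)" using assms by (intro mult_left_mono) auto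
  then show ?thesis by (simp add: power2_eq_square algebra_simps)
qed



theorem proposition1:
  fixes M :: "'a pmf" and X :: "nat \<Rightarrow> 'a \<Rightarrow> nat" and n :: nat
  assumes bin: "\<And>i \<omega>. i \<in> {1..n} \<Longrightarrow> X i \<omega> \<in> {0, 1}"
  defines "p \<equiv> (\<lambda>i. measure_pmf.expectation M (\<lambda>\<omega>. real (X i \<omega>)))"
      and "S \<equiv> (\<lambda>\<omega>. \<Sum>i\<in>{1..n}. X i \<omega>)"
      and "lam \<equiv> measure_pmf.expectation M (\<lambda>\<omega>. real (\<Sum>i\<in>{1..n}. X i \<omega>))"
  shows "kl_div (map_pmf S M) (Po lam)
           \<le> ereal ((\<Sum>i\<in>{1..n}. (p i)\<^sup>2)
               + ((\<Sum>i\<in>{1..n}. shannon_entropy (map_pmf (X i) M))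
                  - shannon_entropy (map_pmf (\<lambda>\<omega>. map (\<lambda>i. X i \<omega>) [1..<n+1]) M)))"
proof -
  define V where "V = (\<lambda>\<omega>. map (\<lambda>i. X i \<omega>) [1..<n+1])"
  define J where "J = map_pmf V M"
  define A where "A = set_pmf J"
  define r where "r = (\<lambda>j. p (Suc j))"
  have Vnth: "V \<omega> ! j = X (Suc j) \<omega>" if "j < n" for \<omega> j
    using that unfolding V_def by (simp del: upt_Suc)
  have AL: "A \<subseteq> Lst n"
  proof
    fix xs assume "xs \<in> A"
    then obtain \<omega> where xs: "xs = V \<omega>" unfolding A_def J_def by auto
    have "\<forall>i\<in>set [1..<n+1]. X i \<omega> \<in> {0,1}" using bin by (simp del: upt_Suc) 
    then have "set xs \<subseteq> {0,1}" unfolding xs V_def by auto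
    moreover have "length xs = n" unfolding xs V_def by simp
    ultimately show "xs \<in> Lst n" unfolding Lst_def by simp
  qed
  have finA: "finite A" using AL finite_Lst finite_subset by blast
  have Jpos: "pmf J xs > 0" if "xs \<in> A" for xs using that unfolding A_def by (simp add: pmf_positive)
  have bin01: "xs ! j \<in> {0,1}" if "xs \<in> A" "j < n" for xs j
  proof - have "xs \<in> Lst n" using AL that by auto then have "length xs = n" "set xs \<subseteq> {0,1}" unfolding Lst_def by auto moreover have "xs!j \<in> set xs" using that(2) \<open>length xs = n\<close> by simp ultimately show ?thesis by blast qed
  have p_nn: "p i \<ge> 0" for i unfolding p_def by (intro Bochner_Integration.integral_nonneg) auto
  have r_nn: "r j \<ge> 0" for j unfolding r_def by (rule p_nn)
  have r_eq: "r j = (\<Sum>xs\<in>A. pmf J xs * real (xs!j))" if "j < n" for j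
  proof -
    have "r j = measure_pmf.expectation M (\<lambda>\<omega>. real (V \<omega> ! j))"
      unfolding r_def p_def using Vnth[OF that] by simp
    also have "\<dots> = measure_pmf.expectation J (\<lambda>xs. real (xs ! j))"
      unfolding J_def by simp
    also have "\<dots> = (\<Sum>xs\<in>A. pmf J xs * real (xs!j))"
      by (subst integral_measure_pmf[OF finA]) (auto simp: A_def)
    finally show ?thesis .
  qed
  have S_eq: "S \<omega> = sum_list (V \<omega>)" for \<omega>
  proof -
    have "sum_list (V \<omega>) = (\<Sum>i\<in>set [1..<n+1]. X i \<omega>)"
      unfolding V_def by (rule sum_list_distinct_conv_sum_set) simp
    also have "set [1..<n+1] = {1..n}" by auto
    finally show ?thesis unfolding S_def by simp
  qed
  have lam_eq: "lam = (\<Sum>j<n. r j)"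
  proof -
    have "lam = measure_pmf.expectation M (\<lambda>\<omega>. real (sum_list (V \<omega>)))"
      unfolding lam_def using S_eq unfolding S_def by simp
    also have "\<dots> = measure_pmf.expectation J (\<lambda>xs. real (sum_list xs))"
      unfolding J_def by simp
    also have "\<dots> = (\<Sum>xs\<in>A. pmf J xs * real (sum_list xs))"
      by (subst integral_measure_pmf[OF finA]) (auto simp: A_def)
    also have "\<dots> = (\<Sum>xs\<in>A. \<Sum>j<n. pmf J xs * real (xs!j))"
    proof (intro sum.cong refl)
      fix xs assume "xs \<in> A"
      then have "length xs = n" using AL unfolding Lst_def by auto
      then show "pmf J xs * real (sum_list xs) = (\<Sum>j<n. pmf J xs * real (xs!j))"
        by (simp add: sum_list_sum_nth atLeast0LessThan sum_distrib_left)
    qed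
    also have "\<dots> = (\<Sum>j<n. r j)"
      by (subst sum.swap) (simp add: r_eq)
    finally show ?thesis .
  qed
  have lam_nn: "lam \<ge> 0" unfolding lam_eq using r_nn by (simp add: sum_nonneg)
  define P where "P = map_pmf sum_list J"
  have SP: "map_pmf S M = P" unfolding P_def J_def map_pmf_comp by (intro map_pmf_cong refl) (simp add: S_eq)
  have setP: "set_pmf P = sum_list ` A" unfolding P_def A_def by simp
  have finP: "finite (set_pmf P)" using setP finA by simp
  have Pk: "pmf P k = (\<Sum>xs\<in>{xs\<in>A. sum_list xs = k}. pmf J xs)" for k
    unfolding P_def A_def by (rule pmf_map_fin) (use finA in \<open>simp add: A_def\<close>)
  define w where "w = (\<lambda>xs. \<Prod>j<n. r j ^ (xs ! j))"
  have fac_pos: "r j ^ (xs ! j) > 0" if xsA: "xs \<in> A" and j: "j < n" for xs j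
  proof (cases "xs ! j = 0")
    case True then show ?thesis by simp
  next
    case False
    then have x1: "xs ! j = 1" using bin01[OF xsA j] by auto
    have "pmf J xs * real (xs ! j) \<le> (\<Sum>ys\<in>A. pmf J ys * real (ys!j))"
      by (rule member_le_sum) (use xsA finA in auto)
    then have "r j > 0" using r_eq[OF j] Jpos[OF xsA] x1 by simp
    then show ?thesis by simp
  qed
  have w_pos: "w xs > 0" if "xs \<in> A" for xs
    unfolding w_def using fac_pos[OF that] by (intro prod_pos) auto
  have w_bound: "(\<Sum>xs\<in>{xs\<in>A. sum_list xs = k}. w xs) \<le> lam ^ k / fact k" for k
  proof -
    have "(\<Sum>xs\<in>{xs\<in>A. sum_list xs = k}. w xs) = (\<Sum>xs\<in>A. if sum_list xs = k then w xs else 0)"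
      using finA by (simp add: sum.inter_filter)
    also have "\<dots> \<le> (\<Sum>xs\<in>Lst n. if sum_list xs = k then w xs else 0)"
      using AL finite_Lst r_nn by (intro sum_mono2) (auto simp: w_def intro!: prod_nonneg)
    also have "\<dots> = esym r n k" unfolding esym_def w_def ..
    also have "\<dots> \<le> lam ^ k / fact k" unfolding lam_eq by (rule esym_bound) (rule r_nn)
    finally show ?thesis .
  qed
  have Po_ge: "exp (-lam) * (\<Sum>xs\<in>{xs\<in>A. sum_list xs = k}. w xs) \<le> pmf (Po lam) k" for k
    unfolding Po_pmf[OF lam_nn] using w_bound[of k] by (simp add: mult_left_mono times_divide_eq_right[symmetric] del: times_divide_eq_right)
  have Po_pos: "pmf (Po lam) k > 0" if kP: "k \<in> set_pmf P" for k
  proof -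
    obtain xs where xs: "xs \<in> A" "sum_list xs = k" using kP unfolding setP by auto
    have "w xs \<le> (\<Sum>xs\<in>{xs\<in>A. sum_list xs = k}. w xs)"
      by (rule member_le_sum) (use xs finA w_pos in \<open>auto intro: less_imp_le\<close>)
    then have "0 < exp (-lam) * (\<Sum>xs\<in>{xs\<in>A. sum_list xs = k}. w xs)"
      using w_pos[OF xs(1)] by simp
    then show ?thesis using Po_ge[of k] by linarith
  qed
  have Ppos: "pmf P k > 0" if "k \<in> set_pmf P" for k using that by (simp add: pmf_positive)
  define D where "D = (\<Sum>xs\<in>A. pmf J xs * ln (pmf J xs / (exp (-lam) * w xs)))"
  have KL: "kl_div P (Po lam) = ereal (\<Sum>k\<in>set_pmf P. pmf P k * ln (pmf P k / pmf (Po lam) k))"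
    by (rule kl_fin[OF finP Po_pos])
  have KLD: "(\<Sum>k\<in>set_pmf P. pmf P k * ln (pmf P k / pmf (Po lam) k)) \<le> D"
  proof -
    have regroup: "(\<Sum>xs\<in>A. h xs * f (sum_list xs)) = (\<Sum>k\<in>set_pmf P. f k * (\<Sum>xs\<in>{xs\<in>A. sum_list xs = k}. h xs))" for h :: "nat list \<Rightarrow> real" and f :: "nat \<Rightarrow> real"
      unfolding setP
    proof (subst sum.image_gen[OF finA, of _ sum_list], intro sum.cong refl)
      fix k show "(\<Sum>xs\<in>{x \<in> A. sum_list x = k}. h xs * f (sum_list xs)) = f k * (\<Sum>xs\<in>{xs\<in>A. sum_list xs = k}. h xs)"
        by (subst sum_distrib_left) (auto intro!: sum.cong)
    qed
    define e where "e = exp (-lam)"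
    have e_pos: "e > 0" unfolding e_def by simp
    have sP: "sum_list xs \<in> set_pmf P" if "xs \<in> A" for xs using that setP by auto
    have "(\<Sum>k\<in>set_pmf P. pmf P k * ln (pmf P k / pmf (Po lam) k))
        = (\<Sum>xs\<in>A. pmf J xs * ln (pmf P (sum_list xs) / pmf (Po lam) (sum_list xs)))"
    proof -
      have "(\<Sum>k\<in>set_pmf P. pmf P k * ln (pmf P k / pmf (Po lam) k))
          = (\<Sum>k\<in>set_pmf P. ln (pmf P k / pmf (Po lam) k) * (\<Sum>xs\<in>{xs\<in>A. sum_list xs = k}. pmf J xs))"
        by (intro sum.cong refl) (simp add: Pk[symmetric])
      then show ?thesis using regroup[of "pmf J" "\<lambda>k. ln (pmf P k / pmf (Po lam) k)"] by simp
    qed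
    also have "\<dots> \<le> (\<Sum>xs\<in>A. pmf J xs * ln (pmf J xs / (e * w xs)) - pmf J xs
                  + (e * w xs) * (pmf P (sum_list xs) / pmf (Po lam) (sum_list xs)))"
    proof (rule sum_mono)
      fix xs assume xs: "xs \<in> A"
      show "pmf J xs * ln (pmf P (sum_list xs) / pmf (Po lam) (sum_list xs))
          \<le> pmf J xs * ln (pmf J xs / (e * w xs)) - pmf J xs
                  + (e * w xs) * (pmf P (sum_list xs) / pmf (Po lam) (sum_list xs))"
        using gibbs_term[OF Jpos[OF xs] mult_pos_pos[OF e_pos w_pos[OF xs]] Ppos[OF sP[OF xs]] Po_pos[OF sP[OF xs]]]
        by simp
    qed
    also have "\<dots> = D - 1 + (\<Sum>xs\<in>A. (e * w xs) * (pmf P (sum_list xs) / pmf (Po lam) (sum_list xs)))"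
      unfolding D_def e_def using sum_pmf_eq_1[OF finA, of J] by (simp add: sum.distrib sum_subtractf A_def)
    also have "(\<Sum>xs\<in>A. (e * w xs) * (pmf P (sum_list xs) / pmf (Po lam) (sum_list xs)))
       = (\<Sum>k\<in>set_pmf P. (pmf P k / pmf (Po lam) k) * (\<Sum>xs\<in>{xs\<in>A. sum_list xs = k}. e * w xs))"
      by (rule regroup)
    also have "\<dots> \<le> (\<Sum>k\<in>set_pmf P. (pmf P k / pmf (Po lam) k) * pmf (Po lam) k)"
    proof (rule sum_mono)
      fix k assume k: "k \<in> set_pmf P"
      have "(\<Sum>xs\<in>{xs\<in>A. sum_list xs = k}. e * w xs) \<le> pmf (Po lam) k"
        using Po_ge[of k] unfolding e_def by (simp add: sum_distrib_left)
      then show "(pmf P k / pmf (Po lam) k) * (\<Sum>xs\<in>{xs\<in>A. sum_list xs = k}. e * w xs) \<le> (pmf P k / pmf (Po lam) k) * pmf (Po lam) k"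
        using Ppos[OF k] Po_pos[OF k] by (intro mult_left_mono) auto
    qed
    also have "\<dots> = (\<Sum>k\<in>set_pmf P. pmf P k)"
      using Po_pos by (intro sum.cong refl) (auto dest!: Po_pos)
    also have "\<dots> = 1" using sum_pmf_eq_1[OF finP, of P] by simp
    finally show ?thesis by simp
  qed
  have Dval: "D = shannon_entropy J * (-1) + (\<Sum>j<n. r j - r j * ln (r j))"
  proof -
    have lnq: "ln (pmf J xs / (exp (-lam) * w xs)) = ln (pmf J xs) + lam - (\<Sum>j<n. real (xs!j) * ln (r j))"
      if xs: "xs \<in> A" for xs
    proof -
      have "ln (w xs) = (\<Sum>j<n. ln (r j ^ (xs!j)))"
        unfolding w_def proof (rule ln_prod) fix j assume "j \<in> {..<n}" then show "r j ^ (xs!j) \<noteq> 0" using fac_pos[OF xs, of j] by (metis less_irrefl lessThan_iff) qed simp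
      also have "\<dots> = (\<Sum>j<n. real (xs!j) * ln (r j))"
      proof (intro sum.cong refl)
        fix j assume "j \<in> {..<n}"
        then have "xs ! j \<in> {0,1}" using bin01[OF xs] by auto
        then show "ln (r j ^ (xs!j)) = real (xs!j) * ln (r j)" by auto
      qed
      finally have lw: "ln (w xs) = (\<Sum>j<n. real (xs!j) * ln (r j))" .
      have "ln (pmf J xs / (exp (-lam) * w xs)) = ln (pmf J xs) - (ln (exp (-lam)) + ln (w xs))"
        using Jpos[OF xs] w_pos[OF xs] by (simp add: ln_div ln_mult)
      then show ?thesis using lw by simp
    qed
    have "D = (\<Sum>xs\<in>A. pmf J xs * ln (pmf J xs) + lam * pmf J xs - (\<Sum>j<n. ln (r j) * (pmf J xs * real (xs!j))))"
      unfolding D_def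
      proof (intro sum.cong refl)
        fix xs assume xs: "xs \<in> A"
        show "pmf J xs * ln (pmf J xs / (exp (- lam) * w xs)) =
          pmf J xs * ln (pmf J xs) + lam * pmf J xs - (\<Sum>j<n. ln (r j) * (pmf J xs * real (xs ! j)))"
          unfolding lnq[OF xs] by (simp add: algebra_simps sum_distrib_left)
      qed
    also have "\<dots> = (\<Sum>xs\<in>A. pmf J xs * ln (pmf J xs)) + lam * (\<Sum>xs\<in>A. pmf J xs)
        - (\<Sum>j<n. ln (r j) * (\<Sum>xs\<in>A. pmf J xs * real (xs!j)))"
      by (simp add: sum.distrib sum_subtractf sum_distrib_left sum.swap[of _ "{..<n}"])
    also have "(\<Sum>xs\<in>A. pmf J xs) = 1" using sum_pmf_eq_1[OF finA, of J] by (simp add: A_def)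
    also have "(\<Sum>j<n. ln (r j) * (\<Sum>xs\<in>A. pmf J xs * real (xs!j))) = (\<Sum>j<n. r j * ln (r j))"
      by (intro sum.cong refl) (simp add: r_eq)
    also have "(\<Sum>xs\<in>A. pmf J xs * ln (pmf J xs)) = - shannon_entropy J"
      using entropy_sup[OF finA, of J] by (simp add: A_def)
    finally show ?thesis unfolding lam_eq by (simp add: sum_subtractf)
  qed
  have HX: "shannon_entropy (map_pmf (X (Suc j)) M) = - (r j * ln (r j) + (1 - r j) * ln (1 - r j))"
     and r1: "r j \<le> 1" if "j < n" for j
  proof -
    define B where "B = map_pmf (X (Suc j)) M"
    have Xb: "X (Suc j) \<omega> \<in> {0,1}" for \<omega> using bin[of "Suc j" \<omega>] that by simp
    have sB: "set_pmf B \<subseteq> {0,1}" unfolding B_def using Xb by (simp add: image_subset_iff)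
    have "r j = measure_pmf.expectation B real" unfolding r_def p_def B_def by simp
    also have "\<dots> = (\<Sum>x\<in>{0,1}. pmf B x *\<^sub>R real x)"
      by (rule integral_measure_pmf) (use sB in auto)
    finally have rB: "r j = pmf B 1" by simp
    have "(\<Sum>x\<in>{0::nat,1}. pmf B x) = 1" by (rule sum_pmf_eq_1) (use sB in auto)
    then have rB0: "pmf B 0 = 1 - r j" using rB by simp
    have "shannon_entropy B = - (\<Sum>x\<in>{0::nat,1}. pmf B x * ln (pmf B x))"
      by (rule entropy_sup) (use sB in auto)
    then show "shannon_entropy (map_pmf (X (Suc j)) M) = - (r j * ln (r j) + (1 - r j) * ln (1 - r j))"
      unfolding B_def[symmetric] using rB rB0 by simp
    show "r j \<le> 1" using rB pmf_le_1 by simp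
  qed
  have fin: "D \<le> (\<Sum>j<n. (r j)\<^sup>2) + ((\<Sum>j<n. shannon_entropy (map_pmf (X (Suc j)) M)) - shannon_entropy J)"
  proof -
    have "(\<Sum>j<n. r j - r j * ln (r j)) \<le> (\<Sum>j<n. (r j)\<^sup>2 + shannon_entropy (map_pmf (X (Suc j)) M))"
    proof (rule sum_mono)
      fix j assume "j \<in> {..<n}"
      then have j: "j < n" by simp
      show "r j - r j * ln (r j) \<le> (r j)\<^sup>2 + shannon_entropy (map_pmf (X (Suc j)) M)"
        unfolding HX[OF j] using bern_kl[OF r_nn r1[OF j]] by simp
    qed
    then show ?thesis unfolding Dval by (simp add: sum.distrib)
  qed
  have "(\<Sum>i\<in>{1..n}. (p i)\<^sup>2) = (\<Sum>j<n. (r j)\<^sup>2)" unfolding r_def by (rule sum_bounds_lt_plus1[symmetric])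
  moreover have "(\<Sum>i\<in>{1..n}. shannon_entropy (map_pmf (X i) M)) = (\<Sum>j<n. shannon_entropy (map_pmf (X (Suc j)) M))"
    by (rule sum_bounds_lt_plus1[symmetric])
  moreover have "map_pmf (\<lambda>\<omega>. map (\<lambda>i. X i \<omega>) [1..<n+1]) M = J" unfolding J_def V_def ..
  ultimately show ?thesis using SP KL KLD fin by simp
qed
end
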